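(* Let $\tau,t\in\mathbb{R}$ and let $P_n(x;\tau,t)$ be the monic orthogonal polynomials for the weight $\omega(x;\tau,t)=\exp(-x^6+\tau x^4+tx^2)$ on $\mathbb{R}$, with recurrence coefficients $\beta_n$. Then for $n\ge1$ $$\frac{dP_n}{dx}(x;\tau,t)=-B_n(x;\tau,t)P_n(x;\tau,t)+A_n(x;\tau,t)P_{n-1}(x;\tau,t),$$ where $$A_n(x;\tau,t)=\beta_n\big\{6x^4-4\tau x^2-2t+(6x^2-4\tau)(\beta_n+\beta_{n+1})\big\}+6\beta_n\big\{\beta_n(\beta_{n-1}+\beta_n+\beta_{n+1})+\beta_{n+1}(\beta_n+\beta_{n+1}+\beta_{n+2})\big\},$$ $$B_n(x;\tau,t)=\beta_n\big\{6x^3-4\tau x+6x(\beta_{n-1}+\beta_n+\beta_{n+1})\big\}.$$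
   Context: The monic polynomials $P_n(x;\tau,t)$ of exact degree $n$ are orthogonal with respect to $\omega(x;\tau,t)$ on $\mathbb{R}$. They satisfy $P_{n+1}(x)=xP_n(x)-\beta_nP_{n-1}(x)$ with $P_{-1}=0$, $P_0=1$, where $\beta_n>0$ for $n\ge1$. The convention $\beta_0=0$ is used. *)

theory Defs
  imports "HOL-Analysis.Analysis" "HOL-Computational_Algebra.Polynomial"
begin

definition sextic_weight :: "real \<Rightarrow> real \<Rightarrow> real \<Rightarrow> real" where
  "sextic_weight \<tau> t x = exp (- (x ^ 6) + \<tau> * x ^ 4 + t * x ^ 2)"

definition monic_OPS_rec ::
  "(real \<Rightarrow> real) \<Rightarrow> (nat \<Rightarrow> real poly) \<Rightarrow> (nat \<Rightarrow> real) \<Rightarrow> bool" where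
  "monic_OPS_rec w P \<beta> \<longleftrightarrow>
     (\<forall>n. degree (P n) = n \<and> lead_coeff (P n) = 1) \<and>
     (\<forall>m n. m \<noteq> n \<longrightarrow>
        ((\<lambda>x. poly (P m) x * poly (P n) x * w x) has_integral 0) UNIV) \<and>
     \<beta> 0 = 0 \<and> (\<forall>n\<ge>1. \<beta> n > 0) \<and>
     (\<forall>n. P (Suc n) = [:0, 1:] * P n - smult (\<beta> n) (if n = 0 then 0 else P (n - 1)))"

definition coeffA :: "real \<Rightarrow> real \<Rightarrow> (nat \<Rightarrow> real) \<Rightarrow> nat \<Rightarrow> real \<Rightarrow> real" where
  "coeffA \<tau> t \<beta> n x =
     \<beta> n * (6 * x ^ 4 - 4 * \<tau> * x ^ 2 - 2 * t + (6 * x ^ 2 - 4 * \<tau>) * (\<beta> n + \<beta> (n + 1)))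
     + 6 * \<beta> n * (\<beta> n * (\<beta> (n - 1) + \<beta> n + \<beta> (n + 1))
                   + \<beta> (n + 1) * (\<beta> n + \<beta> (n + 1) + \<beta> (n + 2)))"

definition coeffB :: "real \<Rightarrow> real \<Rightarrow> (nat \<Rightarrow> real) \<Rightarrow> nat \<Rightarrow> real \<Rightarrow> real" where
  "coeffB \<tau> t \<beta> n x =
     \<beta> n * (6 * x ^ 3 - 4 * \<tau> * x + 6 * x * (\<beta> (n - 1) + \<beta> n + \<beta> (n + 1)))"

end

theory Submission
  imports Defs "HOL-Probability.Distributions" "HOL-Real_Asymp.Real_Asymp"
begin


lemma sw_exponent_bound:
  fixes \<tau> t x :: real
  defines "M \<equiv> \<bar>\<tau>\<bar> + \<bar>t\<bar> + 1"
  shows "- (x ^ 6) + \<tau> * x ^ 4 + t * x ^ 2 \<le> (\<bar>\<tau>\<bar> * M^2 + (\<bar>t\<bar> + 1) * M) - x^2 / 2"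
proof -
  define u where "u = x^2"
  have u0: "u \<ge> 0" unfolding u_def by simp
  have e6: "x^6 = u^3" and e4: "x^4 = u^2" unfolding u_def by (simp_all add: power_mult[symmetric])
  have M1: "M \<ge> 1" unfolding M_def by simp
  have a: "\<tau> * u^2 \<le> \<bar>\<tau>\<bar> * u^2" by (simp add: mult_right_mono)
  have b: "t * u \<le> \<bar>t\<bar> * u" using u0 by (simp add: mult_right_mono)
  show ?thesis
  proof (cases "u \<le> M")
    case True
    have "\<bar>\<tau>\<bar> * u^2 \<le> \<bar>\<tau>\<bar> * M^2" using True u0 by (intro mult_left_mono power_mono) auto
    moreover have "(\<bar>t\<bar> + 1/2) * u \<le> (\<bar>t\<bar> + 1) * M" using True u0 by (intro mult_mono) auto
    moreover have u3: "u^3 \<ge> 0" using u0 by simp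
    ultimately show ?thesis unfolding e6 e4 u_def[symmetric] using a b by (simp add: algebra_simps) (use u3 in linarith)
  next
    case False
    have "u^3 = u * u^2" by (simp add: power3_eq_cube power2_eq_square)
    also have "\<dots> \<ge> M * u^2" using False by (intro mult_right_mono) auto
    finally have c: "u^3 \<ge> M * u^2" .
    have "u^2 \<ge> u" using False M1 by (simp add: power2_eq_square)
    hence "(\<bar>t\<bar> + 1) * u \<le> (\<bar>t\<bar> + 1) * u^2" by (intro mult_left_mono) auto
    moreover have "(\<bar>t\<bar> + 1/2) * u \<le> (\<bar>t\<bar> + 1) * u" using u0 by (intro mult_right_mono) auto
    ultimately have "(\<bar>t\<bar> + 1) * u^2 \<ge> (\<bar>t\<bar> + 1/2) * u" by linarith
    moreover have "M * u^2 = \<bar>\<tau>\<bar> * u^2 + (\<bar>t\<bar> + 1) * u^2" unfolding M_def by (simp add: algebra_simps)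
    moreover have "0 \<le> \<bar>\<tau>\<bar> * M^2 + (\<bar>t\<bar> + 1) * M" using M1 by simp
    ultimately show ?thesis unfolding e6 e4 u_def[symmetric] using a b c by (simp add: algebra_simps)
  qed
qed

definition Cw :: "real \<Rightarrow> real \<Rightarrow> real" where
  "Cw \<tau> t = exp (\<bar>\<tau>\<bar> * (\<bar>\<tau>\<bar> + \<bar>t\<bar> + 1)^2 + (\<bar>t\<bar> + 1) * (\<bar>\<tau>\<bar> + \<bar>t\<bar> + 1))"

lemma sw_pos: "sextic_weight \<tau> t x > 0"
  by (simp add: sextic_weight_def)

lemma sw_le: "sextic_weight \<tau> t x \<le> Cw \<tau> t * exp (-(x^2) / 2)"
proof -
  have "sextic_weight \<tau> t x \<le> exp ((\<bar>\<tau>\<bar> * (\<bar>\<tau>\<bar> + \<bar>t\<bar> + 1)^2 + (\<bar>t\<bar> + 1) * (\<bar>\<tau>\<bar> + \<bar>t\<bar> + 1)) - x^2/2)"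
    unfolding sextic_weight_def exp_le_cancel_iff by (rule sw_exponent_bound)
  also have "\<dots> = Cw \<tau> t * exp (-(x^2) / 2)" unfolding Cw_def
    by (simp add: exp_add[symmetric])
  finally show ?thesis .
qed

lemma sw_measurable[measurable]: "sextic_weight \<tau> t \<in> borel_measurable borel"
  unfolding sextic_weight_def by measurable

lemma mono_integrable: "integrable lborel (\<lambda>x. x^k * sextic_weight \<tau> t x)"
proof (rule Bochner_Integration.integrable_bound[where f="\<lambda>x. (Cw \<tau> t * sqrt(2*pi)) * (std_normal_density x * \<bar>x\<bar>^k)"])
  show "integrable lborel (\<lambda>x. (Cw \<tau> t * sqrt(2*pi)) * (std_normal_density x * \<bar>x\<bar>^k))"
    by (intro integrable_mult_right integrable_std_normal_moment_abs)
  show "(\<lambda>x. x^k * sextic_weight \<tau> t x) \<in> borel_measurable lborel" by measurable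
  show "AE x in lborel. norm (x^k * sextic_weight \<tau> t x) \<le> norm ((Cw \<tau> t * sqrt(2*pi)) * (std_normal_density x * \<bar>x\<bar>^k))"
  proof (rule AE_I2)
    fix x :: real
    have cw: "Cw \<tau> t > 0" unfolding Cw_def by simp
    have "norm (x^k * sextic_weight \<tau> t x) = \<bar>x\<bar>^k * sextic_weight \<tau> t x"
      using sw_pos[of \<tau> t x] by (simp add: abs_mult power_abs)
    also have "\<dots> \<le> \<bar>x\<bar>^k * (Cw \<tau> t * exp (-(x^2) / 2))"
      by (intro mult_left_mono sw_le) auto
    also have "\<dots> = (Cw \<tau> t * sqrt(2*pi)) * (std_normal_density x * \<bar>x\<bar>^k)"
      by (simp add: std_normal_density_def)
    also have "\<dots> = norm ((Cw \<tau> t * sqrt(2*pi)) * (std_normal_density x * \<bar>x\<bar>^k))"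
      using cw by (simp add: abs_mult)
    finally show "norm (x^k * sextic_weight \<tau> t x) \<le> norm ((Cw \<tau> t * sqrt(2*pi)) * (std_normal_density x * \<bar>x\<bar>^k))" .
  qed
qed

lemma sw_deriv:
  "((\<lambda>x. x^k * sextic_weight \<tau> t x) has_real_derivative
     (real k * x^(k-1) + x^k * (-6*x^5 + 4*\<tau>*x^3 + 2*t*x)) * sextic_weight \<tau> t x) (at x)"
  unfolding sextic_weight_def
  by (rule derivative_eq_intros refl | simp)+ (simp add: algebra_simps)

lemma lim_pm: "((\<lambda>R. R^k * sextic_weight \<tau> t R - (-R)^k * sextic_weight \<tau> t (-R)) \<longlongrightarrow> 0) at_top"
  unfolding sextic_weight_def by real_asymp

lemma mono_ibp_L:
  "integral\<^sup>L lborel (\<lambda>x. (real k * x^(k-1) + x^k * (-6*x^5 + 4*\<tau>*x^3 + 2*t*x)) * sextic_weight \<tau> t x) = 0"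
proof -
  define w where "w = sextic_weight \<tau> t"
  define g where "g = (\<lambda>x. (real k * x^(k-1) + x^k * (-6*x^5 + 4*\<tau>*x^3 + 2*t*x)) * w x)"
  define F where "F = (\<lambda>x. x^k * w x)"
  have geq: "g = (\<lambda>x. real k * (x^(k-1) * w x) + (-6) * (x^(k+5) * w x) + (4*\<tau>) * (x^(k+3) * w x) + (2*t) * (x^(k+1) * w x))"
    unfolding g_def by (rule ext) (simp add: algebra_simps power_add power3_eq_cube)
  have gint: "integrable lborel g"
    unfolding geq w_def by (intro Bochner_Integration.integrable_add Bochner_Integration.integrable_mult_right mono_integrable)
  have gmeas[measurable]: "g \<in> borel_measurable borel"
    using gint by (simp add: borel_measurable_integrable)
  have deriv: "(F has_real_derivative g x) (at x)" for x
    unfolding F_def g_def w_def by (rule sw_deriv)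
  have gcont: "continuous_on S g" for S
    unfolding g_def w_def sextic_weight_def by (intro continuous_intros)
  have ftc: "integral\<^sup>L lborel (\<lambda>x. indicator {-R .. R} x *\<^sub>R g x) = F R - F (-R)" if "R \<ge> 0" for R
  proof (rule integral_FTC_atLeastAtMost)
    show "-R \<le> R" using that by simp
    show "(F has_vector_derivative g x) (at x within {-R..R})" for x
      using deriv[of x] by (simp add: has_real_derivative_iff_has_vector_derivative has_vector_derivative_at_within)
    show "continuous_on {-R..R} g" by (rule gcont)
  qed
  have lim1: "((\<lambda>R. integral\<^sup>L lborel (\<lambda>x. indicator {-R .. R} x *\<^sub>R g x)) \<longlongrightarrow> integral\<^sup>L lborel g) at_top"
  proof (rule integral_dominated_convergence_at_top[where w="\<lambda>x. norm (g x)"])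
    show "g \<in> borel_measurable lborel" by simp
    show "(\<lambda>x. indicator {-R .. R} x *\<^sub>R g x) \<in> borel_measurable lborel" for R by measurable
    show "integrable lborel (\<lambda>x. norm (g x))" using gint by (rule integrable_norm)
    show "AE x in lborel. ((\<lambda>R. indicator {-R .. R} x *\<^sub>R g x) \<longlongrightarrow> g x) at_top"
    proof (rule AE_I2)
      fix x :: real
      have "eventually (\<lambda>R. indicator {-R .. R} x *\<^sub>R g x = g x) at_top"
        by (rule eventually_at_top_linorder[THEN iffD2], rule exI[of _ "\<bar>x\<bar>"]) (auto simp: indicator_def)
      then show "((\<lambda>R. indicator {-R .. R} x *\<^sub>R g x) \<longlongrightarrow> g x) at_top" by (rule tendsto_eventually)
    qed
    show "\<forall>\<^sub>F R in at_top. AE x in lborel. norm (indicator {-R .. R} x *\<^sub>R g x) \<le> norm (g x)"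
      by (intro always_eventually allI AE_I2) (auto simp: indicator_def)
  qed
  have "eventually (\<lambda>R. integral\<^sup>L lborel (\<lambda>x. indicator {-R .. R} x *\<^sub>R g x) = F R - F (-R)) at_top"
    by (rule eventually_at_top_linorder[THEN iffD2], rule exI[of _ 0]) (use ftc in auto)
  from tendsto_cong[OF this] lim1 have lim2: "((\<lambda>R. F R - F (-R)) \<longlongrightarrow> integral\<^sup>L lborel g) at_top" by simp
  have lim3: "((\<lambda>R. F R - F (-R)) \<longlongrightarrow> 0) at_top"
    unfolding F_def w_def by (rule lim_pm)
  from tendsto_unique[OF _ lim2 lim3] show ?thesis unfolding g_def w_def by simp
qed

lemma mono_ibp:
  "integral UNIV (\<lambda>x. (real k * x^(k-1) + x^k * (-6*x^5 + 4*\<tau>*x^3 + 2*t*x)) * sextic_weight \<tau> t x) = 0"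
proof -
  have geq: "(\<lambda>x. (real k * x^(k-1) + x^k * (-6*x^5 + 4*\<tau>*x^3 + 2*t*x)) * sextic_weight \<tau> t x) = (\<lambda>x. real k * (x^(k-1) * sextic_weight \<tau> t x) + (-6) * (x^(k+5) * sextic_weight \<tau> t x) + (4*\<tau>) * (x^(k+3) * sextic_weight \<tau> t x) + (2*t) * (x^(k+1) * sextic_weight \<tau> t x))"
    by (rule ext) (simp add: algebra_simps power_add power3_eq_cube)
  have gint: "integrable lborel (\<lambda>x. (real k * x^(k-1) + x^k * (-6*x^5 + 4*\<tau>*x^3 + 2*t*x)) * sextic_weight \<tau> t x)"
    unfolding geq by (intro Bochner_Integration.integrable_add Bochner_Integration.integrable_mult_right mono_integrable)
  from has_integral_integral_lborel[OF gint] mono_ibp_L[of k \<tau> t]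
  show ?thesis by (simp add: integral_unique)
qed

lemma mono_integrable_on: "(\<lambda>x. x^k * sextic_weight \<tau> t x) integrable_on UNIV"
  using has_integral_integral_lborel[OF mono_integrable] by blast



definition Lw :: "real \<Rightarrow> real \<Rightarrow> real poly \<Rightarrow> real" where
  "Lw \<tau> t q = integral UNIV (\<lambda>x. poly q x * sextic_weight \<tau> t x)"

lemma poly_int: "(\<lambda>x. poly q x * sextic_weight \<tau> t x) integrable_on UNIV"
proof -
  have eq: "(\<lambda>x. poly q x * sextic_weight \<tau> t x) = (\<lambda>x. \<Sum>i\<le>degree q. coeff q i *\<^sub>R (x^i * sextic_weight \<tau> t x))"
    by (rule ext) (simp add: poly_altdef sum_distrib_right mult.assoc)
  show ?thesis unfolding eq
    by (intro Henstock_Kurzweil_Integration.integrable_sum finite_atMost integrable_cmul mono_integrable_on)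
qed

lemma Lw_add: "Lw \<tau> t (p + q) = Lw \<tau> t p + Lw \<tau> t q"
  unfolding Lw_def by (simp add: distrib_right integral_add poly_int)

lemma Lw_smult: "Lw \<tau> t (smult c p) = c * Lw \<tau> t p"
proof -
  have "Lw \<tau> t (smult c p) = integral UNIV (\<lambda>x. c *\<^sub>R (poly p x * sextic_weight \<tau> t x))"
    unfolding Lw_def by (simp add: mult.assoc)
  also have "\<dots> = c * Lw \<tau> t p" unfolding integral_cmul Lw_def by simp
  finally show ?thesis .
qed

lemma Lw_minus: "Lw \<tau> t (- p) = - Lw \<tau> t p"
  using Lw_smult[of \<tau> t "-1" p] by simp

lemma Lw_diff: "Lw \<tau> t (p - q) = Lw \<tau> t p - Lw \<tau> t q"
  using Lw_add[of \<tau> t p "-q"] Lw_minus[of \<tau> t q] by simp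

lemma Lw_zero: "Lw \<tau> t 0 = 0"
  unfolding Lw_def by simp

lemma Lw_sum: "Lw \<tau> t (\<Sum>i\<in>A. f i) = (\<Sum>i\<in>A. Lw \<tau> t (f i))"
  by (induction A rule: infinite_finite_induct) (simp_all add: Lw_zero Lw_add)

definition Vp :: "real \<Rightarrow> real \<Rightarrow> real poly" where
  "Vp \<tau> t = [:0, 2*t, 0, 4*\<tau>, 0, -6:]"

lemma poly_Vp: "poly (Vp \<tau> t) x = -6*x^5 + 4*\<tau>*x^3 + 2*t*x"
  unfolding Vp_def by (simp add: algebra_simps power_numeral_reduce)

lemma Lw_ibp_monom: "Lw \<tau> t (pderiv (monom 1 k)) + Lw \<tau> t (monom 1 k * Vp \<tau> t) = 0"
proof -
  have "Lw \<tau> t (pderiv (monom 1 k)) + Lw \<tau> t (monom 1 k * Vp \<tau> t) = Lw \<tau> t (pderiv (monom 1 k) + monom 1 k * Vp \<tau> t)"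
    by (simp add: Lw_add)
  also have "\<dots> = integral UNIV (\<lambda>x. (real k * x^(k-1) + x^k * (-6*x^5 + 4*\<tau>*x^3 + 2*t*x)) * sextic_weight \<tau> t x)"
    unfolding Lw_def by (simp add: pderiv_monom poly_monom poly_Vp)
  also have "\<dots> = 0" by (rule mono_ibp)
  finally show ?thesis .
qed

lemma pderiv_sum': "pderiv (\<Sum>i\<in>A. f i) = (\<Sum>i\<in>A. pderiv (f i))"
  by (induction A rule: infinite_finite_induct) (simp_all add: pderiv_add)

lemma Lw_ibp: "Lw \<tau> t (pderiv p) + Lw \<tau> t (p * Vp \<tau> t) = 0"
proof -
  have p: "p = (\<Sum>i\<le>degree p. smult (coeff p i) (monom 1 i))"
    by (simp add: smult_monom poly_as_sum_of_monoms)
  have "Lw \<tau> t (pderiv p) + Lw \<tau> t (p * Vp \<tau> t)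
     = (\<Sum>i\<le>degree p. coeff p i * (Lw \<tau> t (pderiv (monom 1 i)) + Lw \<tau> t (monom 1 i * Vp \<tau> t)))"
    apply (subst (1 2) p)
    by (simp add: pderiv_sum' pderiv_smult Lw_sum sum_distrib_right sum_distrib_left Lw_smult sum.distrib algebra_simps)
  also have "\<dots> = 0" by (simp add: Lw_ibp_monom)
  finally show ?thesis .
qed



definition pX :: "real poly" where "pX = [:0, 1:]"

lemma poly_pX[simp]: "poly pX y = y"
  by (simp add: pX_def)

lemma poly_ext_eq:
  fixes p q :: "real poly"
  assumes "\<And>y. poly p y = poly q y" shows "p = q"
proof -
  have "poly p = poly q" using assms by (rule ext)
  then show ?thesis by (simp only: poly_eq_poly_eq_iff)
qed

lemma idx_ne[simp]: "m - Suc 0 \<noteq> Suc m" "m - Suc 0 \<noteq> Suc (Suc (Suc m))"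
  "Suc m \<noteq> m - Suc 0" "Suc (Suc (Suc m)) \<noteq> m - Suc 0"
  "m - Suc 0 \<noteq> Suc (Suc m)" "Suc (Suc m) \<noteq> m - Suc 0"
  by arith+

definition Kx :: "real \<Rightarrow> real \<Rightarrow> real \<Rightarrow> real poly" where
  "Kx \<tau> t x = [:6*x^4 - 4*\<tau>*x^2 - 2*t, 6*x^3 - 4*\<tau>*x, 6*x^2 - 4*\<tau>, 6*x, 6:]"

lemma Vdecomp: "Vp \<tau> t = [:poly (Vp \<tau> t) x:] + [:x, -1:] * Kx \<tau> t x"
  by (rule poly_ext_eq) (simp add: poly_Vp Kx_def algebra_simps power_numeral_reduce)

lemma poly5: "[:c0, c1, c2, c3, c4:] * F = smult c0 F + smult c1 (pX * F) + smult c2 (pX^2 * F) + smult c3 (pX^3 * F) + smult c4 (pX^4 * F)"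
  by (rule poly_ext_eq) (simp add: algebra_simps power_numeral_reduce)

locale sops =
  fixes \<tau> t :: real and P :: "nat \<Rightarrow> real poly" and \<beta> :: "nat \<Rightarrow> real"
  assumes ops: "monic_OPS_rec (sextic_weight \<tau> t) P \<beta>"
begin

abbreviation "L \<equiv> Lw \<tau> t"

definition h :: "nat \<Rightarrow> real" where "h k = L (P k * P k)"

lemma degP_leadP: "\<forall>n. degree (P n) = n \<and> lead_coeff (P n) = 1"
  using ops unfolding monic_OPS_rec_def by blast

lemma degP: "degree (P n) = n" using degP_leadP by blast
lemma leadP: "lead_coeff (P n) = 1" using degP_leadP by blast

lemma beta0: "\<beta> 0 = 0"
  using ops unfolding monic_OPS_rec_def by blast

lemma betapos: "n \<ge> 1 \<Longrightarrow> \<beta> n > 0"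
  using ops unfolding monic_OPS_rec_def by blast

lemma recP0: "\<forall>n. P (Suc n) = [:0, 1:] * P n - smult (\<beta> n) (if n = 0 then 0 else P (n - 1))"
  using ops unfolding monic_OPS_rec_def by blast

lemma recP: "P (Suc n) = pX * P n - smult (\<beta> n) (P (n - 1))"
  using recP0 beta0 unfolding pX_def by (cases n) simp_all

lemma recX: "pX * P n = P (Suc n) + smult (\<beta> n) (P (n - 1))"
  using recP[of n] by simp

lemma orth: "m \<noteq> n \<Longrightarrow> L (P m * P n) = 0"
proof -
  assume "m \<noteq> n"
  then have "((\<lambda>x. poly (P m) x * poly (P n) x * sextic_weight \<tau> t x) has_integral 0) UNIV"
    using ops unfolding monic_OPS_rec_def by blast
  then show ?thesis unfolding Lw_def by (simp add: integral_unique)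
qed

lemma P0: "P 0 = 1"
proof -
  have "degree (P 0) = 0" by (rule degP)
  then have "P 0 = [:coeff (P 0) 0:]" by (rule degree_0_id[symmetric])
  also have "coeff (P 0) 0 = 1" using leadP[of 0] degP[of 0] by simp
  finally show ?thesis by (simp add: one_pCons)
qed

lemma coeffP_high: "i > n \<Longrightarrow> coeff (P n) i = 0"
  using degP[of n] by (simp add: coeff_eq_0)

lemma h0: "h 0 > 0"
proof -
  let ?w = "sextic_weight \<tau> t"
  have "h 0 = integral UNIV ?w" unfolding h_def Lw_def P0 by simp
  moreover have "integral {0..1} ?w \<le> integral UNIV ?w"
  proof (rule integral_subset_le)
    show "?w integrable_on {0..1}" unfolding sextic_weight_def
      by (intro integrable_continuous_interval continuous_intros)
    show "?w integrable_on UNIV" using poly_int[of 1 \<tau> t] by simp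
  qed (auto simp: sw_pos less_imp_le)
  moreover have "integral {0..1::real} (\<lambda>_. exp (-1 - \<bar>\<tau>\<bar> - \<bar>t\<bar>)) \<le> integral {0..1} ?w"
  proof (rule Henstock_Kurzweil_Integration.integral_le)
    show "?w integrable_on {0..1}" unfolding sextic_weight_def
      by (intro integrable_continuous_interval continuous_intros)
    fix x :: real assume x: "x \<in> {0..1}"
    have a: "x^6 \<le> 1" "x^4 \<le> 1" "x^2 \<le> 1" "x^4 \<ge> 0" "x^2 \<ge> 0" using x by (auto simp: power_le_one)
    have b: "\<bar>\<tau> * x^4\<bar> \<le> \<bar>\<tau>\<bar>" using a by (simp add: abs_mult mult_left_le)
    have c: "\<bar>t * x^2\<bar> \<le> \<bar>t\<bar>" using a by (simp add: abs_mult mult_left_le)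
    have "-1 - \<bar>\<tau>\<bar> - \<bar>t\<bar> \<le> - (x ^ 6) + \<tau> * x ^ 4 + t * x ^ 2"
      using a(1) b c by linarith
    then show "exp (-1 - \<bar>\<tau>\<bar> - \<bar>t\<bar>) \<le> ?w x" unfolding sextic_weight_def by simp
  qed auto
  moreover have "integral {0..1::real} (\<lambda>_. exp (-1 - \<bar>\<tau>\<bar> - \<bar>t\<bar>)) > 0" by simp
  ultimately show ?thesis by linarith
qed

lemma ip: "L (P a * P b) = (if a = b then h a else 0)"
  by (simp add: h_def orth)

lemma h_Suc: "h (Suc n) = \<beta> (Suc n) * h n"
proof -
  have "P (Suc n) * P (Suc n) = (pX * P (Suc n)) * P n - smult (\<beta> n) (P (Suc n) * P (n - 1))"
    by (subst (2) recP) (simp add: algebra_simps)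
  also have "\<dots> = P (Suc (Suc n)) * P n + smult (\<beta> (Suc n)) (P n * P n) - smult (\<beta> n) (P (Suc n) * P (n - 1))"
    by (subst recX) (simp add: algebra_simps)
  finally have "h (Suc n) = L (P (Suc (Suc n)) * P n) + \<beta> (Suc n) * h n - \<beta> n * L (P (Suc n) * P (n - 1))"
    unfolding h_def by (simp add: Lw_add Lw_diff Lw_smult)
  then show ?thesis by (simp add: orth)
qed

lemma hpos: "h n > 0"
proof (induction n)
  case 0 show ?case by (rule h0)
next
  case (Suc n) then show ?case using betapos[of "Suc n"] by (simp add: h_Suc)
qed

lemma hnz: "h n \<noteq> 0" using hpos[of n] by simp

lemma expand: "(\<forall>i\<ge>n. coeff q i = 0) \<Longrightarrow> q = (\<Sum>k<n. smult (L (q * P k) / h k) (P k))"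
proof (induction n arbitrary: q)
  case 0 then show ?case by (simp add: poly_eq_iff)
next
  case (Suc n)
  define c where "c = coeff q n"
  define r where "r = q - smult c (P n)"
  have r0: "\<forall>i\<ge>n. coeff r i = 0"
  proof (intro allI impI)
    fix i assume i: "i \<ge> n"
    show "coeff r i = 0"
    proof (cases "i = n")
      case True then show ?thesis using leadP[of n] degP[of n] by (simp add: r_def c_def)
    next
      case False then have "i > n" "i \<ge> Suc n" using i by auto
      then show ?thesis using Suc.prems coeffP_high[of n i] by (simp add: r_def)
    qed
  qed
  have IH: "r = (\<Sum>k<n. smult (L (r * P k) / h k) (P k))" using Suc.IH[OF r0] .
  have qr: "q = r + smult c (P n)" by (simp add: r_def)
  have Lk: "L (q * P k) = L (r * P k)" if "k < n" for k
    using that by (simp add: qr distrib_right Lw_add Lw_smult orth)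
  have "L (r * P n) = L ((\<Sum>k<n. smult (L (r * P k) / h k) (P k)) * P n)"
    by (rule arg_cong[where f="\<lambda>z. L (z * P n)", OF IH])
  also have "\<dots> = (\<Sum>k<n. L (r * P k) / h k * L (P k * P n))"
    by (simp add: sum_distrib_right Lw_sum Lw_smult)
  also have "\<dots> = 0" by (rule sum.neutral) (auto simp: orth)
  finally have Lrn: "L (r * P n) = 0" .
  have Lqn: "L (q * P n) = c * h n"
    by (simp add: qr distrib_right Lw_add Lw_smult Lrn h_def)
  have "(\<Sum>k<Suc n. smult (L (q * P k) / h k) (P k))
      = (\<Sum>k<n. smult (L (r * P k) / h k) (P k)) + smult c (P n)"
    by (simp add: Lk Lqn hnz)
  also have "\<dots> = q" using IH qr by simp
  finally show ?case by simp
qed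

lemma orth_low: "(\<forall>i\<ge>n. coeff q i = 0) \<Longrightarrow> L (q * P n) = 0"
proof -
  assume a: "\<forall>i\<ge>n. coeff q i = 0"
  have "L (q * P n) = L ((\<Sum>k<n. smult (L (q * P k) / h k) (P k)) * P n)"
    by (rule arg_cong[where f="\<lambda>z. L (z * P n)", OF expand[OF a]])
  also have "\<dots> = (\<Sum>k<n. L (q * P k) / h k * L (P k * P n))"
    by (simp add: sum_distrib_right Lw_sum Lw_smult)
  also have "\<dots> = 0" by (rule sum.neutral) (auto simp: orth)
  finally show ?thesis .
qed

definition S :: "nat \<Rightarrow> real \<Rightarrow> real poly" where
  "S n x = (\<Sum>k<n. smult (poly (P k) x / h k) (P k))"

lemma reproduce: "(\<forall>i\<ge>n. coeff q i = 0) \<Longrightarrow> L (q * S n x) = poly q x"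
proof -
  assume a: "\<forall>i\<ge>n. coeff q i = 0"
  have "poly q x = poly (\<Sum>k<n. smult (L (q * P k) / h k) (P k)) x"
    by (rule arg_cong[where f="\<lambda>z. poly z x", OF expand[OF a]])
  also have "\<dots> = (\<Sum>k<n. L (q * P k) / h k * poly (P k) x)" by (simp add: poly_sum)
  also have "\<dots> = L (q * S n x)"
    unfolding S_def by (simp add: sum_distrib_left Lw_sum Lw_smult mult_ac)
  finally show ?thesis by simp
qed

lemma coeff_S: "i \<ge> n \<Longrightarrow> coeff (S n x) i = 0"
  unfolding S_def by (auto simp: coeff_sum intro!: sum.neutral coeffP_high)

lemma CD: "[:x, -1:] * S (Suc m) x = smult (1 / h m) (smult (poly (P (Suc m)) x) (P m) - smult (poly (P m) x) (P (Suc m)))"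
proof (induction m)
  case 0
  show ?case by (rule poly_ext_eq) (simp add: S_def P0 recP[of 0] beta0 algebra_simps diff_divide_distrib)
next
  case (Suc m)
  define a where "a = poly (P (Suc m)) x"
  define b where "b = poly (P m) x"
  have S_Suc: "S (Suc (Suc m)) x = S (Suc m) x + smult (a / h (Suc m)) (P (Suc m))"
    by (simp add: S_def a_def)
  have p2: "poly (P (Suc (Suc m))) z = z * poly (P (Suc m)) z - \<beta> (Suc m) * poly (P m) z" for z
    by (subst recP) simp
  show ?case
  proof (rule poly_ext_eq)
    fix y
    have e: "(x - y) * poly (S (Suc m) x) y = (1 / h m) * (a * poly (P m) y - b * poly (P (Suc m)) y)"
      using arg_cong[OF Suc.IH, of "\<lambda>p. poly p y"] by (simp add: a_def b_def left_diff_distrib)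
    have "poly ([:x, -1:] * S (Suc (Suc m)) x) y = (x - y) * poly (S (Suc m) x) y + (x - y) * (a / h (Suc m)) * poly (P (Suc m)) y"
      by (simp add: S_Suc algebra_simps diff_divide_distrib)
    also have "\<dots> = (1 / h m) * (a * poly (P m) y - b * poly (P (Suc m)) y) + (x - y) * (a / h (Suc m)) * poly (P (Suc m)) y"
      by (simp only: e)
    also have "\<dots> = poly (smult (1 / h (Suc m)) (smult (poly (P (Suc (Suc m))) x) (P (Suc m)) - smult (poly (P (Suc m)) x) (P (Suc (Suc m))))) y"
      using hpos[of m] betapos[of "Suc m"] unfolding a_def[symmetric] b_def[symmetric]
      by (simp add: p2 h_Suc a_def b_def field_simps)
    finally show "poly ([:x, -1:] * S (Suc (Suc m)) x) y = poly (smult (1 / h (Suc m)) (smult (poly (P (Suc (Suc m))) x) (P (Suc m)) - smult (poly (P (Suc m)) x) (P (Suc (Suc m))))) y" .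
  qed
qed

lemma parity: "odd (j + a + b) \<Longrightarrow> L (pX^j * (P a * P b)) = 0"
proof (induction j arbitrary: a b)
  case 0
  then have "a \<noteq> b" by auto
  then show ?case by (simp add: orth)
next
  case (Suc j)
  have eq: "pX^(Suc j) * (P a * P b) = pX^j * (P (Suc a) * P b) + smult (\<beta> a) (pX^j * (P (a - 1) * P b))"
  proof -
    have "pX^(Suc j) * (P a * P b) = pX^j * ((pX * P a) * P b)" by (simp add: mult_ac)
    also have "\<dots> = pX^j * (P (Suc a) * P b) + smult (\<beta> a) (pX^j * (P (a - 1) * P b))"
      by (simp only: recX) (simp add: algebra_simps)
    finally show ?thesis .
  qed
  have A: "L (pX^j * (P (Suc a) * P b)) = 0" using Suc.prems by (intro Suc.IH) simp
  have B: "\<beta> a * L (pX^j * (P (a - 1) * P b)) = 0"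
  proof (cases "a = 0")
    case True then show ?thesis by (simp add: beta0)
  next
    case False
    then have "odd (j + (a - 1) + b)" using Suc.prems by (cases a) auto
    from Suc.IH[OF this] show ?thesis by simp
  qed
  show ?case unfolding eq by (simp only: Lw_add Lw_smult A B)
qed

lemma E1: "pX * P (Suc m) = P (Suc (Suc m)) + smult (\<beta> (Suc m)) (P m)"
  by (simp add: recX)

lemma E3: "pX^2 * P (Suc m) = P (Suc (Suc (Suc m))) + smult (\<beta> (Suc (Suc m)) + \<beta> (Suc m)) (P (Suc m)) + smult (\<beta> (Suc m) * \<beta> m) (P (m - 1))"
proof -
  have "pX^2 * P (Suc m) = pX * (pX * P (Suc m))" by (simp add: power2_eq_square mult_ac)
  also have "\<dots> = pX * P (Suc (Suc m)) + smult (\<beta> (Suc m)) (pX * P m)"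
    by (simp only: E1[of m]) (simp add: algebra_simps)
  also have "\<dots> = P (Suc (Suc (Suc m))) + smult (\<beta> (Suc (Suc m)) + \<beta> (Suc m)) (P (Suc m)) + smult (\<beta> (Suc m) * \<beta> m) (P (m - 1))"
    by (simp only: recX E1) (simp add: algebra_simps smult_add_left smult_add_right)
  finally show ?thesis .
qed

lemma M2: "L (pX^2 * (P (Suc m) * P (Suc m))) = h (Suc (Suc m)) + \<beta> (Suc m) * \<beta> (Suc m) * h m"
proof -
  have "pX^2 * (P (Suc m) * P (Suc m)) = (pX * P (Suc m)) * (pX * P (Suc m))" by (simp add: power2_eq_square mult_ac)
  then show ?thesis by (simp only: E1) (simp add: distrib_left distrib_right Lw_add Lw_smult ip)
qed

lemma M4: "L (pX^4 * (P (Suc m) * P (Suc m))) = h (Suc (Suc (Suc m))) + (\<beta> (Suc (Suc m)) + \<beta> (Suc m))^2 * h (Suc m) + (\<beta> (Suc m) * \<beta> m)^2 * h (m - 1)"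
proof -
  have "pX^4 * (P (Suc m) * P (Suc m)) = (pX^2 * P (Suc m)) * (pX^2 * P (Suc m))"
    by (simp add: power_numeral_reduce power2_eq_square mult_ac)
  then show ?thesis by (simp only: E3) (simp add: distrib_left distrib_right Lw_add Lw_smult ip power2_eq_square)
qed

lemma N1: "L (pX * (P (Suc m) * P m)) = \<beta> (Suc m) * h m"
proof -
  have "pX * (P (Suc m) * P m) = (pX * P (Suc m)) * P m" by (simp add: mult_ac)
  then show ?thesis by (simp only: E1) (simp add: distrib_left distrib_right Lw_add Lw_smult ip)
qed

lemma N3: "L (pX^3 * (P (Suc m) * P m)) = (\<beta> (Suc (Suc m)) + \<beta> (Suc m)) * h (Suc m) + \<beta> (Suc m) * \<beta> m * \<beta> m * h (m - 1)"
proof -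
  have "pX^3 * (P (Suc m) * P m) = (pX^2 * P (Suc m)) * (pX * P m)"
    by (simp add: power_numeral_reduce power2_eq_square mult_ac)
  then show ?thesis by (simp only: E3 recX) (simp add: distrib_left distrib_right Lw_add Lw_smult ip)
qed

lemma hb: "\<beta> m * h (m - 1) = h m \<or> m = 0"
  by (cases m) (simp_all add: h_Suc)

lemma LK: "L (Kx \<tau> t x * F) = (6*x^4 - 4*\<tau>*x^2 - 2*t) * L F + (6*x^3 - 4*\<tau>*x) * L (pX*F) + (6*x^2-4*\<tau>) * L (pX^2*F) + 6*x*L (pX^3*F) + 6 * L (pX^4*F)"
  unfolding Kx_def poly5 by (simp add: Lw_add Lw_smult)

lemma ladder: "poly (pderiv (P (Suc m))) x = - coeffB \<tau> t \<beta> (Suc m) x * poly (P (Suc m)) x + coeffA \<tau> t \<beta> (Suc m) x * poly (P m) x"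
proof -
  define n where "n = Suc m"
  define S' where "S' = S n x"
  define pd where "pd = pderiv (P n)"
  define a where "a = poly (P n) x"
  define b where "b = poly (P m) x"
  define K where "K = Kx \<tau> t x"
  have c1: "\<forall>i\<ge>n. coeff pd i = 0" unfolding pd_def by (auto simp: coeff_pderiv coeffP_high)
  have c2: "\<forall>i\<ge>n. coeff (pderiv S') i = 0" unfolding S'_def by (auto simp: coeff_pderiv coeff_S)
  have c3: "\<forall>i\<ge>n. coeff S' i = 0" unfolding S'_def by (auto simp: coeff_S)
  have r1: "poly pd x = L (pd * S')" using reproduce[OF c1] unfolding S'_def by simp
  have r2: "L (pderiv S' * P n) = 0" by (rule orth_low[OF c2])
  have r3: "L (S' * P n) = 0" by (rule orth_low[OF c3])
  have ibp: "L (pderiv (P n * S')) + L (P n * S' * Vp \<tau> t) = 0" by (rule Lw_ibp)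
  have "pderiv (P n * S') = pd * S' + pderiv S' * P n"
    unfolding pd_def by (simp add: pderiv_mult algebra_simps)
  then have "L (pderiv (P n * S')) = L (pd * S')" by (simp add: Lw_add r2)
  with r1 ibp have s1: "poly pd x = - L (P n * S' * Vp \<tau> t)" by simp
  have V: "Vp \<tau> t = [:poly (Vp \<tau> t) x:] + [:x, -1:] * K" unfolding K_def by (rule Vdecomp)
  have "P n * S' * Vp \<tau> t = P n * S' * ([:poly (Vp \<tau> t) x:] + [:x, -1:] * K)"
    by (rule arg_cong[where f="\<lambda>z. P n * S' * z", OF V])
  also have "\<dots> = smult (poly (Vp \<tau> t) x) (S' * P n) + (P n * K) * ([:x, -1:] * S')"
    by (rule poly_ext_eq) (simp add: algebra_simps)
  also have "[:x, -1:] * S' = smult (1 / h m) (smult a (P m) - smult b (P n))"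
    unfolding S'_def n_def a_def b_def by (rule CD)
  also have "(P n * K) * smult (1 / h m) (smult a (P m) - smult b (P n)) = smult (a / h m) (K * (P n * P m)) - smult (b / h m) (K * (P n * P n))"
    by (rule poly_ext_eq) (simp add: algebra_simps)
  finally have s2: "L (P n * S' * Vp \<tau> t) = a / h m * L (K * (P n * P m)) - b / h m * L (K * (P n * P n))"
    by (simp add: Lw_add Lw_diff Lw_smult r3)
  have hm1: "\<beta> m * \<beta> m * h (m - 1) = \<beta> m * h m" using hb[of m] beta0 by auto
  have odd1: "L (pX * (P n * P n)) = 0" using parity[of 1 n n] by simp
  have odd3: "L (pX^3 * (P n * P n)) = 0" using parity[of 3 n n] by simp
  have odd0: "L (P n * P m) = 0" unfolding n_def by (simp add: orth)
  have odd2: "L (pX^2 * (P n * P m)) = 0" using parity[of 2 n m] unfolding n_def by simp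
  have odd4: "L (pX^4 * (P n * P m)) = 0" using parity[of 4 n m] unfolding n_def by simp
  have hS1: "h (Suc m) = \<beta> (Suc m) * h m" by (rule h_Suc)
  have hS2: "h (Suc (Suc m)) = \<beta> (Suc (Suc m)) * \<beta> (Suc m) * h m" by (simp add: h_Suc)
  have hS3: "h (Suc (Suc (Suc m))) = \<beta> (Suc (Suc (Suc m))) * \<beta> (Suc (Suc m)) * \<beta> (Suc m) * h m" by (simp add: h_Suc)
  have e4: "(\<beta> (Suc m) * \<beta> m)^2 * h (m - 1) = \<beta> (Suc m)^2 * \<beta> m * h m"
  proof -
    have "(\<beta> (Suc m) * \<beta> m)^2 * h (m - 1) = \<beta> (Suc m)^2 * (\<beta> m * \<beta> m * h (m - 1))"
      by (simp add: power2_eq_square mult_ac)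
    also have "\<dots> = \<beta> (Suc m)^2 * \<beta> m * h m" using hm1 by simp
    finally show ?thesis .
  qed
  have e3: "\<beta> (Suc m) * \<beta> m * \<beta> m * h (m - 1) = \<beta> (Suc m) * \<beta> m * h m"
    using hm1 by (simp add: mult.assoc)
  have MA: "L (K * (P n * P n)) = h m * coeffA \<tau> t \<beta> n x"
    unfolding K_def LK using odd1 odd3 M2[of m] M4[of m] e4 hS1 hS2 hS3
    unfolding n_def h_def[symmetric] coeffA_def
    by (simp add: algebra_simps power2_eq_square)
  have MB: "L (K * (P n * P m)) = h m * coeffB \<tau> t \<beta> n x"
    unfolding K_def LK using odd0 odd2 odd4 N1[of m] N3[of m] e3 hS1
    unfolding n_def coeffB_def
    by (simp add: algebra_simps power2_eq_square)
  have "L (P n * S' * Vp \<tau> t) = a * coeffB \<tau> t \<beta> n x - b * coeffA \<tau> t \<beta> n x"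
    unfolding s2 MA MB using hnz[of m] by simp
  with s1 show ?thesis unfolding pd_def a_def b_def n_def by simp
qed

end

theorem theorem4p2:
  fixes \<tau> t :: real and P :: "nat \<Rightarrow> real poly" and \<beta> :: "nat \<Rightarrow> real"
  assumes "monic_OPS_rec (sextic_weight \<tau> t) P \<beta>"
    and "n \<ge> 1"
  shows "poly (pderiv (P n)) x
           = - coeffB \<tau> t \<beta> n x * poly (P n) x + coeffA \<tau> t \<beta> n x * poly (P (n - 1)) x"
proof -
  interpret sops \<tau> t P \<beta> using assms(1) by unfold_locales
  obtain m where m: "n = Suc m" using assms(2) by (cases n) auto
  show ?thesis unfolding m using ladder[of m x] by simp
qed

end
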